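(* Let $(A,\circ_A,\vdash_A,\dashv_A)$ be a Gel'fand–Dorfman dialgebra and $P:A\to A$ a linear map which is a derivation of each of the three multiplications $\circ_A,\vdash_A,\dashv_A$. Define $x\cdot_A y=x\circ_A y+P(x)\vdash_A y-P(y)\dashv_A x$ for all $x,y\in A$. Then $(A,\cdot_A)$ is a Leibniz algebra.
   Context: All vector spaces are over a field $\mathbb K$ of characteristic zero. A Leibniz algebra is a vector space with multiplication $\circ$ satisfying $x\circ(y\circ z)=(x\circ y)\circ z+y\circ(x\circ z)$. A linear map $P$ is a derivation of a multiplication $\ast$ if $P(x\ast y)=P(x)\ast y+x\ast P(y)$. A Novikov dialgebra is $(A,\vdash_A,\dashv_A)$ satisfying for all $x,y,z$: (ND1) $x\vdash_A(y\vdash_A z)=(x\vdash_A y)\vdash_A z-(y\dashv_A x)\vdash_A z+y\vdash_A(x\vdash_A z)$; (ND2) $(y\vdash_A z)\dashv_A x=y\vdash_A(z\dashv_A x)-z\dashv_A(y\vdash_A x)+(z\dashv_A y)\dashv_A x$; (ND3) $z\dashv_A(x\vdash_A y)=z\dashv_A(x\dashv_A y)$; (ND4) $(z\dashv_A y)\dashv_A x=(z\dashv_A x)\dashv_A y$; (ND5) $(y\dashv_A x)\vdash_A z=(y\vdash_A z)\dashv_A x=(y\vdash_A x)\vdash_A z$. A Gel'fand–Dorfman dialgebra is $(A,\circ_A,\vdash_A,\dashv_A)$ such that $(A,\circ_A)$ is a Leibniz algebra, $(A,\vdash_A,\dashv_A)$ is a Novikov dialgebra, and for all $x,y,z$: (GD1)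 $x\vdash_A(y\circ_A z)-(x\vdash_A y)\circ_A z-(x\circ_A y)\vdash_A z-y\circ_A(x\vdash_A z)+(x\circ_A z)\dashv_A y=0$; (GD2) $x\circ_A(y\vdash_A z)-(y\circ_A z)\dashv_A x+(y\dashv_A x)\circ_A z-(x\circ_A y)\vdash_A z-y\vdash_A(x\circ_A z)=0$; (GD3) $x\circ_A(z\dashv_A y)+(y\circ_A z)\dashv_A x-z\dashv_A(x\circ_A y)-y\circ_A(z\dashv_A x)-(x\circ_A z)\dashv_A y=0$. *)

theory Defs
  imports Complex_Main
begin

definition bilinear_op :: "('k::field \<Rightarrow> 'v::ab_group_add \<Rightarrow> 'v) \<Rightarrow> ('v \<Rightarrow> 'v \<Rightarrow> 'v) \<Rightarrow> bool" where
  "bilinear_op scale m \<longleftrightarrow>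
     (\<forall>y. Vector_Spaces.linear scale scale (\<lambda>x. m x y)) \<and>
     (\<forall>x. Vector_Spaces.linear scale scale (\<lambda>y. m x y))"

definition leibniz_algebra :: "('k::field \<Rightarrow> 'v::ab_group_add \<Rightarrow> 'v) \<Rightarrow> ('v \<Rightarrow> 'v \<Rightarrow> 'v) \<Rightarrow> bool" where
  "leibniz_algebra scale c \<longleftrightarrow> bilinear_op scale c \<and>
     (\<forall>x y z. c x (c y z) = c (c x y) z + c y (c x z))"

definition is_derivation :: "('v \<Rightarrow> 'v) \<Rightarrow> ('v \<Rightarrow> 'v \<Rightarrow> 'v::ab_group_add) \<Rightarrow> bool" where
  "is_derivation P m \<longleftrightarrow> (\<forall>x y. P (m x y) = m (P x) y + m x (P y))"

definition novikov_dialgebra :: "('k::field \<Rightarrow> 'v::ab_group_add \<Rightarrow> 'v) \<Rightarrow> ('v \<Rightarrow> 'v \<Rightarrow> 'v) \<Rightarrow> ('v \<Rightarrow> 'v \<Rightarrow> 'v) \<Rightarrow> bool" where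
  "novikov_dialgebra scale l r \<longleftrightarrow> bilinear_op scale l \<and> bilinear_op scale r \<and>
    (\<forall>x y z.
      l x (l y z) = l (l x y) z - l (r y x) z + l y (l x z) \<and>
      r (l y z) x = l y (r z x) - r z (l y x) + r (r z y) x \<and>
      r z (l x y) = r z (r x y) \<and>
      r (r z y) x = r (r z x) y \<and>
      l (r y x) z = r (l y z) x \<and> r (l y z) x = l (l y x) z)"

definition GD_dialgebra :: "('k::field \<Rightarrow> 'v::ab_group_add \<Rightarrow> 'v) \<Rightarrow> ('v \<Rightarrow> 'v \<Rightarrow> 'v) \<Rightarrow> ('v \<Rightarrow> 'v \<Rightarrow> 'v) \<Rightarrow> ('v \<Rightarrow> 'v \<Rightarrow> 'v) \<Rightarrow> bool" where
  "GD_dialgebra scale c l r \<longleftrightarrow> leibniz_algebra scale c \<and> novikov_dialgebra scale l r \<and>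
    (\<forall>x y z.
      l x (c y z) - c (l x y) z - l (c x y) z - c y (l x z) + r (c x z) y = 0 \<and>
      c x (l y z) - r (c y z) x + c (r y x) z - l (c x y) z - l y (c x z) = 0 \<and>
      c x (r z y) + r (c y z) x - r z (c x y) - c y (r z x) - r (c x z) y = 0)"

end

theory Submission
  imports Defs
begin

lemma lin_facts:
  assumes "Vector_Spaces.linear s s f"
  shows "f (a + b) = f a + f b" "f (a - b) = f a - f b" "f (s k a) = s k (f a)"
proof -
  have add: "\<And>a b. f (a + b) = f a + f b" and sc: "\<And>k a. f (s k a) = s k (f a)"
    using assms unfolding Vector_Spaces.linear_iff by auto
  show "f (a + b) = f a + f b" "f (s k a) = s k (f a)" by (rule add, rule sc)
  have "f a = f ((a - b) + b)" by simp
  also have "... = f (a - b) + f b" by (rule add)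
  finally show "f (a - b) = f a - f b" by (simp add: algebra_simps)
qed

lemma bil_facts:
  assumes "bilinear_op s m"
  shows "m (a + b) y = m a y + m b y" "m (a - b) y = m a y - m b y" "m (s k a) y = s k (m a y)"
    "m x (a + b) = m x a + m x b" "m x (a - b) = m x a - m x b" "m x (s k a) = s k (m x a)"
  using assms unfolding bilinear_op_def
  by (auto intro: lin_facts[where f="\<lambda>x. m x y"] lin_facts[where f="\<lambda>y. m x y"])

theorem proposition3p12:
  fixes scale :: "'k::field_char_0 \<Rightarrow> 'v::ab_group_add \<Rightarrow> 'v"
    and c l r :: "'v \<Rightarrow> 'v \<Rightarrow> 'v" and P :: "'v \<Rightarrow> 'v"
  assumes "vector_space scale"
    and "GD_dialgebra scale c l r"
    and "Vector_Spaces.linear scale scale P"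
    and "is_derivation P c" and "is_derivation P l" and "is_derivation P r"
  shows "leibniz_algebra scale (\<lambda>x y. c x y + l (P x) y - r (P y) x)"
proof -
  note vs = assms(1)
  have bc: "bilinear_op scale c" and bl: "bilinear_op scale l" and br: "bilinear_op scale r"
    using assms(2) unfolding GD_dialgebra_def leibniz_algebra_def novikov_dialgebra_def by auto
  note E = bil_facts[OF bc] bil_facts[OF bl] bil_facts[OF br] lin_facts[OF assms(3)]
    assms(4-6)[unfolded is_derivation_def, rule_format]
  define d where "d = (\<lambda>x y. c x y + l (P x) y - r (P y) x)"
  have sr: "scale k (u + v - w) = scale k u + scale k v - scale k w" for k u v w
    using vs[unfolded module_iff_vector_space[symmetric]] by (simp add: module.scale_right_diff_distrib module.scale_right_distrib)
  have bd: "bilinear_op scale d"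
    unfolding bilinear_op_def d_def
    by (intro allI conjI Vector_Spaces.linear_iff[THEN iffD2]; use vs in \<open>simp add: E sr algebra_simps\<close>)
  have dl: "d x (d y z) = d (d x y) z + d y (d x z)" for x y z
  proof -
    have leib: "\<And>x y z. c x (c y z) - c (c x y) z - c y (c x z) = 0"
    proof -
      fix x y z
      have "c x (c y z) = c (c x y) z + c y (c x z)"
        using assms(2) unfolding GD_dialgebra_def leibniz_algebra_def by blast
      then show "c x (c y z) - c (c x y) z - c y (c x z) = 0" by (simp add: diff_diff_eq)
    qed
    have nd1: "\<And>x y z. l x (l y z) - (l (l x y) z - l (r y x) z + l y (l x z)) = 0"
     and nd2: "\<And>x y z. r (l y z) x - (l y (r z x) - r z (l y x) + r (r z y) x) = 0"
     and nd3: "\<And>x y z. r z (l x y) - r z (r x y) = 0"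
     and nd4: "\<And>x y z. r (r z y) x - r (r z x) y = 0"
     and nd5a: "\<And>x y z. l (r y x) z - r (l y z) x = 0"
     and nd5b: "\<And>x y z. r (l y z) x - l (l y x) z = 0"
      unfolding right_minus_eq using assms(2) unfolding GD_dialgebra_def novikov_dialgebra_def by blast+
    have gd1: "\<And>x y z. l x (c y z) - c (l x y) z - l (c x y) z - c y (l x z) + r (c x z) y = 0"
     and gd2: "\<And>x y z. c x (l y z) - r (c y z) x + c (r y x) z - l (c x y) z - l y (c x z) = 0"
     and gd3: "\<And>x y z. c x (r z y) + r (c y z) x - r z (c x y) - c y (r z x) - r (c x z) y = 0"
      using assms(2) unfolding GD_dialgebra_def by blast+
    have i0: "c x (c y z) - c (c x y) z - c y (c x z) = 0" by (rule leib)
    have i1: "l (r (P (P y)) x) z - r (l (P (P y)) z) x = 0" by (rule nd5a)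
    have i2: "l (P x) (l (P y) z) - (l (l (P x) (P y)) z - l (r (P y) (P x)) z + l (P y) (l (P x) z)) = 0" by (rule nd1)
    have i3: "l (P (P x)) (l y z) - (l (l (P (P x)) y) z - l (r y (P (P x))) z + l y (l (P (P x)) z)) = 0" by (rule nd1)
    have i4: "l y (l (P (P x)) z) - (l (l y (P (P x))) z - l (r (P (P x)) y) z + l (P (P x)) (l y z)) = 0" by (rule nd1)
    have i5: "l (r y (P (P x))) z - r (l y z) (P (P x)) = 0" by (rule nd5a)
    have i6: "r (l y z) (P (P x)) - l (l y (P (P x))) z = 0" by (rule nd5b)
    have i7: "l (r (P (P x)) y) z - r (l (P (P x)) z) y = 0" by (rule nd5a)
    have i8: "r (r (P (P z)) y) x - r (r (P (P z)) x) y = 0" by (rule nd4)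
    have i9: "r (l (P y) (P z)) x - (l (P y) (r (P z) x) - r (P z) (l (P y) x) + r (r (P z) (P y)) x) = 0" by (rule nd2)
    have i10: "r (P z) (l (P y) x) - r (P z) (r (P y) x) = 0" by (rule nd3)
    have i11: "r (l (P x) (P z)) y - (l (P x) (r (P z) y) - r (P z) (l (P x) y) + r (r (P z) (P x)) y) = 0" by (rule nd2)
    have i12: "c x (r (P z) y) + r (c y (P z)) x - r (P z) (c x y) - c y (r (P z) x) - r (c x (P z)) y = 0" by (rule gd3)
    have i13: "c x (l (P y) z) - r (c (P y) z) x + c (r (P y) x) z - l (c x (P y)) z - l (P y) (c x z) = 0" by (rule gd2)
    have i14: "l (P x) (c y z) - c (l (P x) y) z - l (c (P x) y) z - c y (l (P x) z) + r (c (P x) z) y = 0" by (rule gd1)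
    have key: "d x (d y z) - (d (d x y) z + d y (d x z)) = 0 + (c x (c y z) - c (c x y) z - c y (c x z)) + (l (r (P (P y)) x) z - r (l (P (P y)) z) x) + (l (P x) (l (P y) z) - (l (l (P x) (P y)) z - l (r (P y) (P x)) z + l (P y) (l (P x) z))) + (l (P (P x)) (l y z) - (l (l (P (P x)) y) z - l (r y (P (P x))) z + l y (l (P (P x)) z))) + (l y (l (P (P x)) z) - (l (l y (P (P x))) z - l (r (P (P x)) y) z + l (P (P x)) (l y z))) - (l (r y (P (P x))) z - r (l y z) (P (P x))) - (r (l y z) (P (P x)) - l (l y (P (P x))) z) - (l (r (P (P x)) y) z - r (l (P (P x)) z) y) + (r (r (P (P z)) y) x - r (r (P (P z)) x) y) - (r (l (P y) (P z)) x - (l (P y) (r (P z) x) - r (P z) (l (P y) x) + r (r (P z) (P y)) x)) + (r (P z) (l (P y) x) - r (P z) (r (P y) x)) + (r (l (P x) (P z)) y - (l (P x) (r (P z) y) - r (P z) (l (P x) y) + r (r (P z) (P x)) y)) - (c x (r (P z) y) + r (c y (P z)) x - r (P z) (c x y) - c y (r (P z) x) - r (c x (P z)) y) + (c x (l (P y) z) - r (c (P y) z) x + c (r (P y) x) z - l (c x (P y)) z - l (P y) (c x z)) + (l (P x) (c y z) - c (l (P x) y) z - l (c (P x) y) z - c y (l (P x) z) + r (c (P x) z) y)" by (simp add: d_def E algebra_simps)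
    have "d x (d y z) - (d (d x y) z + d y (d x z)) = 0"
      unfolding key using i0 i1 i2 i3 i4 i5 i6 i7 i8 i9 i10 i11 i12 i13 i14 by simp
    then show ?thesis by simp
  qed
  have "leibniz_algebra scale d" unfolding leibniz_algebra_def using bd dl by blast
  then show ?thesis unfolding d_def .
qed

end
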